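(* Assume (F1), (F2), (H1), (H2). Let $(c,\varphi)$ be a solution of the travelling wave problem and let $\Phi(\xi)=\int_{-\infty}^{\xi}\varphi(s)\,ds$. Then there exists $\gamma>0$ such that $$\sup_{\xi\in\mathbb{R}}\varphi(\xi)e^{-\gamma\xi}<\infty\quad\text{and}\quad\sup_{\xi\in\mathbb{R}}\Phi(\xi)e^{-\gamma\xi}<\infty.$$
   Context: Fix constants $d>0$, $\tau\geq0$, $K>0$, $f:[0,K]^2\to\mathbb{R}$ and $h:\mathbb{R}\to\mathbb{R}$ (partial derivatives of $f$ assumed to exist). (F1) $f\in C([0,K]^2,\mathbb{R})$, $f(0,0)=f(K,K)=0$, $f(u,u)>0$ for $u\in(0,K)$, $\partial_2f(u,v)\geq0$ on $[0,K]^2$. (F2) There exist $M>0$, $\sigma\in(0,1]$ with $0\leq \partial_1f(0,0)u+\partial_2f(0,0)v-f(u,v)\leq M(u+v)^{1+\sigma}$ on $[0,K]^2$, and $\partial_1f(K,K)+\partial_2f(K,K)<0$. (H1) $h\ge0$, even, integrable, $\int_{\mathbb{R}}h=1$. (H2) There is $\lambda_0\in(0,\infty]$ with $\int_0^\infty h(x)e^{\lambda x}dx<\infty$ for all $\lambda<\lambda_0$. Notation: $\Delta_1\varphi(\xi)=\varphi(\xi+1)-2\varphi(\xi)+\varphi(\xi-1)$, $(h*\varphi)(\xi)=\int h(y)\varphi(\xi-y)dy$. A solution $(c,\varphi)$ of the travelling wave problem consists of $c>0$ and a differentiable $\varphi:\mathbb{R}\to\mathbb{R}$ with $-c\varphi'(\xi)+d\Delta_1\varphi(\xi)+f(\varphi(\xi),(h*\varphi)(\xi-c\tau))=0$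 for all $\xi$, $\varphi(-\infty)=0$, $\varphi(+\infty)=K$, $0\le\varphi\le K$. *)

theory Defs
  imports "HOL-Analysis.Analysis"
begin

definition partials_on_square ::
  "real \<Rightarrow> (real \<Rightarrow> real \<Rightarrow> real) \<Rightarrow> (real \<Rightarrow> real \<Rightarrow> real) \<Rightarrow> (real \<Rightarrow> real \<Rightarrow> real) \<Rightarrow> bool" where
  "partials_on_square K f f1 f2 \<longleftrightarrow>
     (\<forall>u\<in>{0..K}. \<forall>v\<in>{0..K}.
        ((\<lambda>x. f x v) has_real_derivative f1 u v) (at u within {0..K}) \<and>
        ((\<lambda>y. f u y) has_real_derivative f2 u v) (at v within {0..K}))"

definition cond_F1 :: "real \<Rightarrow> (real \<Rightarrow> real \<Rightarrow> real) \<Rightarrow> (real \<Rightarrow> real \<Rightarrow> real) \<Rightarrow> bool" where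
  "cond_F1 K f f2 \<longleftrightarrow>
     continuous_on ({0..K} \<times> {0..K}) (\<lambda>(u, v). f u v) \<and>
     f 0 0 = 0 \<and> f K K = 0 \<and>
     (\<forall>u\<in>{0<..<K}. f u u > 0) \<and>
     (\<forall>u\<in>{0..K}. \<forall>v\<in>{0..K}. f2 u v \<ge> 0)"

definition cond_F2 ::
  "real \<Rightarrow> (real \<Rightarrow> real \<Rightarrow> real) \<Rightarrow> (real \<Rightarrow> real \<Rightarrow> real) \<Rightarrow> (real \<Rightarrow> real \<Rightarrow> real) \<Rightarrow> bool" where
  "cond_F2 K f f1 f2 \<longleftrightarrow>
     (\<exists>M>0. \<exists>\<sigma>\<in>{0<..1}. \<forall>u\<in>{0..K}. \<forall>v\<in>{0..K}.
        0 \<le> f1 0 0 * u + f2 0 0 * v - f u v \<and>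
        f1 0 0 * u + f2 0 0 * v - f u v \<le> M * (u + v) powr (1 + \<sigma>)) \<and>
     f1 K K + f2 K K < 0"

definition cond_H1 :: "(real \<Rightarrow> real) \<Rightarrow> bool" where
  "cond_H1 h \<longleftrightarrow> (\<forall>x. h x \<ge> 0) \<and> (\<forall>x. h (- x) = h x) \<and>
     integrable lborel h \<and> (\<integral>x. h x \<partial>lborel) = 1"

definition cond_H2 :: "(real \<Rightarrow> real) \<Rightarrow> bool" where
  "cond_H2 h \<longleftrightarrow> (\<exists>lam0::ereal. 0 < lam0 \<and>
     (\<forall>lam::real. ereal lam < lam0 \<longrightarrow>
        set_integrable lborel {0..} (\<lambda>x. h x * exp (lam * x))))"

definition discr_lap :: "(real \<Rightarrow> real) \<Rightarrow> real \<Rightarrow> real" where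
  "discr_lap \<phi> \<xi> = \<phi> (\<xi> + 1) - 2 * \<phi> \<xi> + \<phi> (\<xi> - 1)"

definition conv :: "(real \<Rightarrow> real) \<Rightarrow> (real \<Rightarrow> real) \<Rightarrow> real \<Rightarrow> real" where
  "conv h \<phi> \<xi> = (\<integral>y. h y * \<phi> (\<xi> - y) \<partial>lborel)"

definition tw_solution ::
  "real \<Rightarrow> real \<Rightarrow> real \<Rightarrow> (real \<Rightarrow> real \<Rightarrow> real) \<Rightarrow> (real \<Rightarrow> real) \<Rightarrow> real \<Rightarrow> (real \<Rightarrow> real) \<Rightarrow> bool" where
  "tw_solution d \<tau> K f h c \<phi> \<longleftrightarrow>
     c > 0 \<and> (\<forall>\<xi>. \<phi> differentiable (at \<xi>)) \<and>
     (\<forall>\<xi>. - c * deriv \<phi> \<xi> + d * discr_lap \<phi> \<xi> + f (\<phi> \<xi>) (conv h \<phi> (\<xi> - c * \<tau>)) = 0) \<and>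
     (\<phi> \<longlongrightarrow> 0) at_bot \<and> (\<phi> \<longlongrightarrow> K) at_top \<and>
     (\<forall>\<xi>. 0 \<le> \<phi> \<xi> \<and> \<phi> \<xi> \<le> K)"

end

theory Submission
  imports Defs
begin


locale tw =
  fixes d \<tau> K c :: real and f f1 f2 :: "real \<Rightarrow> real \<Rightarrow> real" and h \<phi> :: "real \<Rightarrow> real"
    and M \<sigma> :: real
  assumes d: "d > 0" and tau: "\<tau> \<ge> 0" and K: "K > 0" and c: "c > 0"
    and partials: "partials_on_square K f f1 f2"
    and fcont: "continuous_on ({0..K} \<times> {0..K}) (\<lambda>(u, v). f u v)"
    and fuu: "\<And>u. u\<in>{0<..<K} \<Longrightarrow> f u u > 0"
    and f2nn: "\<And>u v. u\<in>{0..K} \<Longrightarrow> v\<in>{0..K} \<Longrightarrow> f2 u v \<ge> 0"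
    and M: "M > 0" and sig: "0 < \<sigma>" "\<sigma> \<le> 1"
    and F2: "\<And>u v. u\<in>{0..K} \<Longrightarrow> v\<in>{0..K} \<Longrightarrow>
        0 \<le> f1 0 0 * u + f2 0 0 * v - f u v \<and>
        f1 0 0 * u + f2 0 0 * v - f u v \<le> M * (u + v) powr (1 + \<sigma>)"
    and hnn: "\<And>x. h x \<ge> 0" and hint: "integrable lborel h" and hone: "(\<integral>x. h x \<partial>lborel) = 1"
    and diff: "\<And>\<xi>. \<phi> differentiable (at \<xi>)"
    and eq: "\<And>\<xi>. - c * deriv \<phi> \<xi> + d * discr_lap \<phi> \<xi> + f (\<phi> \<xi>) (conv h \<phi> (\<xi> - c * \<tau>)) = 0"
    and lim0: "(\<phi> \<longlongrightarrow> 0) at_bot"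
    and bnd: "\<And>\<xi>. 0 \<le> \<phi> \<xi> \<and> \<phi> \<xi> \<le> K"
begin

definition "a = f1 0 0"
definition "b = f2 0 0"
definition "\<kappa> = c * \<tau>"
definition "\<psi> s = conv h \<phi> (s - \<kappa>)"

lemma e2ennreal_one: "e2ennreal 1 = 1" by (metis e2ennreal_ereal ennreal_1 one_ereal_def)

lemma kappa_nn: "\<kappa> \<ge> 0" using c tau by (simp add: \<kappa>_def)

lemma phi_nn: "\<phi> x \<ge> 0" and phi_le: "\<phi> x \<le> K" using bnd by auto

lemma phi_cont: "continuous_on UNIV \<phi>"
  using diff by (simp add: continuous_at_imp_continuous_on differentiable_imp_continuous_within)

lemma phi_isCont: "isCont \<phi> x"
  using diff differentiable_imp_continuous_within by blast

lemma phi_meas[measurable]: "\<phi> \<in> borel_measurable borel"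
  using phi_cont by (simp add: borel_measurable_continuous_onI)

lemma h_meas[measurable]: "h \<in> borel_measurable borel"
  using borel_measurable_integrable[OF hint] by simp

lemma h_meas'[measurable]: "h \<in> borel_measurable lborel"
  using borel_measurable_integrable[OF hint] by simp

lemma b_nn: "b \<ge> 0" using f2nn K by (simp add: b_def)

lemma ab_pos: "a + b > 0"
proof -
  have u: "K/2 \<in> {0<..<K}" "K/2 \<in> {0..K}" using K by auto
  have "f (K/2) (K/2) > 0" using fuu u by blast
  moreover have "f (K/2) (K/2) \<le> a * (K/2) + b * (K/2)" using F2[OF u(2) u(2)] by (simp add: a_def b_def)
  ultimately have "(a+b) * (K/2) > 0" by (simp add: algebra_simps)
  thus ?thesis using K by (simp add: zero_less_mult_iff)
qed

lemma f_lower: "u\<in>{0..K} \<Longrightarrow> v\<in>{0..K} \<Longrightarrow> f u v \<ge> a * u + b * v - M * (u + v) powr (1 + \<sigma>)"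
  using F2 by (force simp: a_def b_def)

lemma f_upper: "u\<in>{0..K} \<Longrightarrow> v\<in>{0..K} \<Longrightarrow> f u v \<le> a * u + b * v"
  using F2 by (force simp: a_def b_def)

lemma f_mono: assumes u: "u\<in>{0..K}" and v: "0 \<le> v" "v \<le> v'" "v' \<le> K"
  shows "f u v \<le> f u v'"
proof (rule DERIV_nonneg_imp_increasing_open[of v v' "f u"])
  show "v \<le> v'" by fact
  fix x assume x: "v < x" "x < v'"
  have "((\<lambda>y. f u y) has_real_derivative f2 u x) (at x within {0..K})"
    using partials u x v unfolding partials_on_square_def by auto
  moreover have "at x within {0..K} = at x" using x v
    by (intro at_within_interior) (auto simp: interior_atLeastAtMost_real)
  ultimately have "DERIV (f u) x :> f2 u x" by simp
  moreover have "f2 u x \<ge> 0" using f2nn u x v by auto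
  ultimately show "\<exists>y. DERIV (f u) x :> y \<and> 0 \<le> y" by blast
next
  have "continuous_on {0..K} (f u)"
  proof -
    have "continuous_on {0..K} ((\<lambda>(u, v). f u v) \<circ> (\<lambda>y. (u, y)))"
      by (rule continuous_on_compose) (use u in \<open>auto intro!: continuous_intros continuous_on_subset[OF fcont]\<close>)
    thus ?thesis by (simp add: o_def)
  qed
  thus "continuous_on {v..v'} (f u)" by (rule continuous_on_subset) (use v in auto)
qed

lemma f_bounded: obtains Fm where "Fm \<ge> 0" "\<And>u v. u\<in>{0..K} \<Longrightarrow> v\<in>{0..K} \<Longrightarrow> \<bar>f u v\<bar> \<le> Fm"
proof -
  have "compact ((\<lambda>(u, v). f u v) ` ({0..K} \<times> {0..K}))"
    by (intro compact_continuous_image fcont compact_Times) auto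
  then obtain B where "\<forall>x\<in>(\<lambda>(u, v). f u v) ` ({0..K} \<times> {0..K}). norm x \<le> B"
    using compact_imp_bounded bounded_iff by blast
  then have "\<And>u v. u\<in>{0..K} \<Longrightarrow> v\<in>{0..K} \<Longrightarrow> \<bar>f u v\<bar> \<le> B" by force
  moreover have "B \<ge> 0" using calculation[of 0 0] K by fastforce
  ultimately show ?thesis using that by blast
qed


lemma phi_deriv: "(\<phi> has_real_derivative deriv \<phi> x) (at x)"
  using diff DERIV_deriv_iff_real_differentiable by blast

lemma phi_meas'[measurable]: "\<phi> \<in> borel_measurable lborel"
  by simp

lemma conv_int: "integrable lborel (\<lambda>y. h y * \<phi> (s - y))"
proof (rule Bochner_Integration.integrable_bound[where M=lborel and f="\<lambda>y. K * h y"])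
  show "integrable lborel (\<lambda>y. K * h y)" using hint by simp
  show "(\<lambda>y. h y * \<phi> (s - y)) \<in> borel_measurable lborel" by measurable
  have "\<And>y. h y * \<phi> (s - y) \<le> K * h y"
    by (metis mult.commute mult_left_mono phi_le hnn)
  then show "AE y in lborel. norm (h y * \<phi> (s - y)) \<le> norm (K * h y)"
    using hnn phi_nn K by (intro AE_I2) (simp add: abs_mult)
qed

lemma psi_eq: "\<psi> s = (\<integral>y. h y * \<phi> (s - \<kappa> - y) \<partial>lborel)"
  by (simp add: \<psi>_def conv_def)

lemma psi_nn: "\<psi> s \<ge> 0" unfolding psi_eq
  by (intro integral_nonneg_AE AE_I2) (simp add: hnn phi_nn)

lemma psi_le: "\<psi> s \<le> K"
proof -
  have "\<psi> s \<le> (\<integral>y. K * h y \<partial>lborel)" unfolding psi_eq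
  proof (intro integral_mono conv_int)
    show "integrable lborel (\<lambda>y. K * h y)" using hint by simp
    show "\<And>y. y \<in> space lborel \<Longrightarrow> h y * \<phi> (s - \<kappa> - y) \<le> K * h y"
      by (metis mult.commute mult_left_mono phi_le hnn)
  qed
  also have "\<dots> = K" using hone by simp
  finally show ?thesis .
qed

definition "psiR R s = (\<integral>y. indicator {-R..R} y * h y * \<phi> (s - \<kappa> - y) \<partial>lborel)"
definition "HR R = (\<integral>y. indicator {-R..R} y * h y \<partial>lborel)"

lemma psiR_int: "integrable lborel (\<lambda>y. indicator {-R..R} y * h y * \<phi> (s - y))"
proof (rule Bochner_Integration.integrable_bound[where M=lborel and f="\<lambda>y. K * h y"])
  show "integrable lborel (\<lambda>y. K * h y)" using hint by simp
  show "(\<lambda>y. indicator {-R..R} y * h y * \<phi> (s - y)) \<in> borel_measurable lborel" by measurable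
  have "\<And>y. indicator {-R..R} y * h y * \<phi> (s - y) \<le> K * h y"
  proof -
    fix y
    have "h y * \<phi> (s - y) \<le> K * h y" by (metis mult.commute mult_left_mono phi_le hnn)
    then show "indicator {-R..R} y * h y * \<phi> (s - y) \<le> K * h y"
      using hnn[of y] K by (simp add: indicator_def)
  qed
  then show "AE y in lborel. norm (indicator {-R..R} y * h y * \<phi> (s - y)) \<le> norm (K * h y)"
    using hnn phi_nn K by (intro AE_I2) (simp add: abs_mult)
qed

lemma psiR_int': "integrable lborel (\<lambda>y. indicator {-R..R} y * h y * \<phi> (s - \<kappa> - y))"
  using psiR_int[of R "s - \<kappa>"] by simp

lemma HR_int: "integrable lborel (\<lambda>y. indicator {-R..R} y * h y)"
proof (rule Bochner_Integration.integrable_bound[where M=lborel and f="\<lambda>y. h y"])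
  show "integrable lborel (\<lambda>y. h y)" using hint by simp
  show "(\<lambda>y. indicator {-R..R} y * h y) \<in> borel_measurable lborel" by measurable
  show "AE y in lborel. norm (indicator {-R..R} y * h y) \<le> norm (h y)"
    using hnn by (intro AE_I2) (simp add: indicator_def)
qed

lemma psiR_nn: "psiR R s \<ge> 0" unfolding psiR_def
  by (intro integral_nonneg_AE AE_I2) (simp add: hnn phi_nn)

lemma HR_nn: "HR R \<ge> 0" unfolding HR_def
  by (intro integral_nonneg_AE AE_I2) (simp add: hnn)

lemma HR_le1: "HR R \<le> 1"
proof -
  have "HR R \<le> (\<integral>y. h y \<partial>lborel)" unfolding HR_def
    by (intro integral_mono HR_int hint) (simp add: indicator_def hnn)
  thus ?thesis using hone by simp
qed

lemma psiR_le_psi: "psiR R s \<le> \<psi> s"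
  unfolding psiR_def psi_eq
  by (intro integral_mono psiR_int' conv_int) (simp add: indicator_def hnn phi_nn)

lemma psiR_small:
  assumes e: "e \<ge> 0" and sm: "\<And>z. z \<in> {s-\<kappa>-R..s-\<kappa>+R} \<Longrightarrow> \<phi> z \<le> e"
  shows "psiR R s \<le> e"
proof -
  have "psiR R s \<le> (\<integral>y. e * h y \<partial>lborel)" unfolding psiR_def
  proof (intro integral_mono psiR_int')
    show "integrable lborel (\<lambda>y. e * h y)" using hint by simp
    fix y
    show "indicator {-R..R} y * h y * \<phi> (s - \<kappa> - y) \<le> e * h y"
    proof (cases "y \<in> {-R..R}")
      case True
      then have "\<phi> (s - \<kappa> - y) \<le> e" using sm by auto
      then have "h y * \<phi> (s - \<kappa> - y) \<le> h y * e" by (rule mult_left_mono) (rule hnn)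
      then show ?thesis using True by (simp add: mult.commute)
    qed (simp add: e hnn)
  qed
  also have "\<dots> = e" using hone by simp
  finally show ?thesis .
qed

lemma HR_lim: "(\<lambda>n. HR (real n)) \<longlonglongrightarrow> 1"
proof -
  have "(\<lambda>n. \<integral>y. indicator {-real n..real n} y * h y \<partial>lborel) \<longlonglongrightarrow> (\<integral>y. h y \<partial>lborel)"
  proof (rule integral_dominated_convergence[where w = h])
    show "AE y in lborel. (\<lambda>n. indicator {-real n..real n} y * h y) \<longlonglongrightarrow> h y"
    proof (intro AE_I2)
      fix y :: real
      obtain N :: nat where "\<bar>y\<bar> \<le> real N" using real_arch_simple by blast
      then have "\<forall>n\<ge>N. indicator {-real n..real n} y * h y = h y"
        by (auto simp: indicator_def)
      then show "(\<lambda>n. indicator {-real n..real n} y * h y) \<longlonglongrightarrow> h y"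
        by (intro tendsto_eventually) (auto simp: eventually_sequentially)
    qed
    show "\<And>n. AE y in lborel. norm (indicator {-real n..real n} y * h y) \<le> h y"
      using hnn by (intro AE_I2) (simp add: indicator_def)
  qed (use hint in auto)
  then show ?thesis using hone by (simp add: HR_def)
qed

lemma phi_lip: obtains \<Lambda> where "\<Lambda> > 0" "\<And>x y. \<bar>\<phi> x - \<phi> y\<bar> \<le> \<Lambda> * \<bar>x - y\<bar>"
proof -
  obtain Fm where Fm: "Fm \<ge> 0" "\<And>u v. u\<in>{0..K} \<Longrightarrow> v\<in>{0..K} \<Longrightarrow> \<bar>f u v\<bar> \<le> Fm"
    using f_bounded by blast
  define \<Lambda> where "\<Lambda> = (2*d*K + Fm)/c + 1"
  have Lpos: "\<Lambda> > 0" using d K c Fm by (simp add: \<Lambda>_def add_pos_nonneg)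
  have dbound: "\<bar>deriv \<phi> x\<bar> \<le> \<Lambda>" for x
  proof -
    have e: "c * deriv \<phi> x = d * discr_lap \<phi> x + f (\<phi> x) (\<psi> x)"
      using eq[of x] by (simp add: \<psi>_def \<kappa>_def)
    have dl: "\<bar>discr_lap \<phi> x\<bar> \<le> 2*K"
      using bnd[of "x+1"] bnd[of x] bnd[of "x-1"] by (simp add: discr_lap_def abs_le_iff)
    have fb: "\<bar>f (\<phi> x) (\<psi> x)\<bar> \<le> Fm" using Fm(2) bnd[of x] psi_nn psi_le by auto
    have "\<bar>d * discr_lap \<phi> x\<bar> \<le> d * (2*K)"
      using dl d by (simp add: abs_mult)
    then have "\<bar>c * deriv \<phi> x\<bar> \<le> d * (2*K) + Fm"
      unfolding e using fb by linarith
    then have "c * \<bar>deriv \<phi> x\<bar> \<le> 2*d*K + Fm" using c by (simp add: abs_mult)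
    then have "\<bar>deriv \<phi> x\<bar> \<le> (2*d*K + Fm)/c" using c by (simp add: field_simps)
    then show ?thesis by (simp add: \<Lambda>_def)
  qed
  have "\<bar>\<phi> x - \<phi> y\<bar> \<le> \<Lambda> * \<bar>x - y\<bar>" if xy: "y < x" for x y
  proof -
    obtain z where "\<phi> x - \<phi> y = (x - y) * deriv \<phi> z"
      using MVT2[OF xy, of \<phi> "deriv \<phi>"] phi_deriv by blast
    then have "\<bar>\<phi> x - \<phi> y\<bar> = \<bar>x - y\<bar> * \<bar>deriv \<phi> z\<bar>" by (simp add: abs_mult)
    also have "\<dots> \<le> \<bar>x - y\<bar> * \<Lambda>" by (intro mult_left_mono dbound) auto
    finally show ?thesis by (simp add: mult.commute)
  qed
  note H = this
  have "\<bar>\<phi> x - \<phi> y\<bar> \<le> \<Lambda> * \<bar>x - y\<bar>" for x y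
  proof (cases x y rule: linorder_cases)
    case less
    then show ?thesis using H[of x y] by (simp add: abs_minus_commute)
  next
    case greater
    then show ?thesis using H[of y x] by simp
  qed simp
  with Lpos that show ?thesis by blast
qed

lemma psiR_lip: assumes L: "\<And>x y. \<bar>\<phi> x - \<phi> y\<bar> \<le> \<Lambda> * \<bar>x - y\<bar>" and Lp: "\<Lambda> \<ge> 0"
  shows "\<bar>psiR R s - psiR R s'\<bar> \<le> \<Lambda> * \<bar>s - s'\<bar>"
proof -
  let ?g = "\<lambda>s y. indicator {-R..R} y * h y * \<phi> (s - \<kappa> - y)"
  have "psiR R s - psiR R s' = (\<integral>y. ?g s y - ?g s' y \<partial>lborel)"
    unfolding psiR_def by (rule Bochner_Integration.integral_diff[symmetric]) (rule psiR_int')+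
  then have "\<bar>psiR R s - psiR R s'\<bar> \<le> (\<integral>y. norm (?g s y - ?g s' y) \<partial>lborel)"
    using integral_norm_bound[of lborel "\<lambda>y. ?g s y - ?g s' y"] by simp
  also have "\<dots> \<le> (\<integral>y. (\<Lambda> * \<bar>s - s'\<bar>) * h y \<partial>lborel)"
  proof (intro integral_mono)
    show "integrable lborel (\<lambda>y. norm (?g s y - ?g s' y))"
      by (intro integrable_norm Bochner_Integration.integrable_diff psiR_int')
    show "integrable lborel (\<lambda>y. (\<Lambda> * \<bar>s - s'\<bar>) * h y)" using hint by simp
    fix y
    have "\<bar>\<phi> (s - \<kappa> - y) - \<phi> (s' - \<kappa> - y)\<bar> \<le> \<Lambda> * \<bar>s - s'\<bar>" using L[of "s - \<kappa> - y" "s' - \<kappa> - y"] by simp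
    then have "h y * \<bar>\<phi> (s - \<kappa> - y) - \<phi> (s' - \<kappa> - y)\<bar> \<le> h y * (\<Lambda> * \<bar>s - s'\<bar>)"
      by (intro mult_left_mono hnn)
    then show "norm (?g s y - ?g s' y) \<le> (\<Lambda> * \<bar>s - s'\<bar>) * h y"
    proof (cases "y \<in> {-R..R}")
      case True
      have "?g s y - ?g s' y = h y * (\<phi> (s - \<kappa> - y) - \<phi> (s' - \<kappa> - y))"
        using True by (simp add: algebra_simps)
      then have "norm (?g s y - ?g s' y) = h y * \<bar>\<phi> (s - \<kappa> - y) - \<phi> (s' - \<kappa> - y)\<bar>"
        using hnn[of y] by (simp add: abs_mult)
      then show ?thesis using \<open>h y * _ \<le> _\<close> by (simp add: mult.commute)
    qed (use hnn Lp in simp)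
  qed
  also have "\<dots> = \<Lambda> * \<bar>s - s'\<bar>" using hone by simp
  finally show ?thesis .
qed

definition "G = (SOME G. \<forall>x. (G has_vector_derivative \<phi> x) (at x))"

lemma G_deriv: "(G has_real_derivative \<phi> x) (at x)"
proof -
  have "\<exists>G. \<forall>x::real. -\<infinity> < ereal x \<longrightarrow> ereal x < \<infinity> \<longrightarrow> (G has_vector_derivative \<phi> x) (at x)"
    by (rule einterval_antiderivative) (auto intro: phi_isCont)
  then have "\<exists>G. \<forall>x. (G has_vector_derivative \<phi> x) (at x)" by simp
  then have "\<forall>x. (G has_vector_derivative \<phi> x) (at x)" unfolding G_def by (rule someI_ex)
  then show ?thesis by (simp add: has_real_derivative_iff_has_vector_derivative)
qed

lemma G_int: "u \<le> v \<Longrightarrow> (\<phi> has_integral (G v - G u)) {u..v}"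
  by (intro fundamental_theorem_of_calculus)
     (auto intro: has_vector_derivative_at_within G_deriv[unfolded has_real_derivative_iff_has_vector_derivative])

lemma G_cont: "continuous_on A G"
  using G_deriv by (meson DERIV_isCont continuous_at_imp_continuous_on)

lemma G_mono_lip: assumes "u \<le> v" shows "0 \<le> G v - G u" "G v - G u \<le> K * (v - u)"
proof -
  have "0 \<le> integral {u..v} \<phi>" by (rule integral_nonneg) (use G_int[OF assms] phi_nn in auto)
  moreover have "integral {u..v} \<phi> \<le> integral {u..v} (\<lambda>_. K)"
    by (rule integral_le) (use G_int[OF assms] phi_le in auto)
  ultimately show "0 \<le> G v - G u" "G v - G u \<le> K * (v - u)"
    using G_int[OF assms] assms by (auto simp: integral_unique mult.commute)
qed

lemma G_mono: "u \<le> v \<Longrightarrow> G u \<le> G v" using G_mono_lip by fastforce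


lemma psiR_cont: "continuous_on UNIV (psiR R)"
proof -
  obtain \<Lambda> where L: "\<Lambda> > 0" "\<And>x y. \<bar>\<phi> x - \<phi> y\<bar> \<le> \<Lambda> * \<bar>x - y\<bar>" using phi_lip by blast
  have "\<Lambda>-lipschitz_on UNIV (psiR R)"
    unfolding lipschitz_on_def dist_real_def using psiR_lip[OF L(2)] L(1) by auto
  then show ?thesis by (rule lipschitz_on_continuous_on)
qed

lemma psiR_integral_lower:
  assumes xt: "x \<le> t"
  shows "HR R * max 0 (G (t - \<kappa> - R) - G (x - \<kappa> + R)) \<le> integral {x..t} (psiR R)"
proof -
  define J where "J = integral {x..t} (psiR R)"
  define m0 where "m0 = max 0 (G (t - \<kappa> - R) - G (x - \<kappa> + R))"
  let ?g = "\<lambda>s y. indicator {-R..R} y * h y * \<phi> (s - \<kappa> - y)"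
  have hasint: "(psiR R has_integral J) {x..t}"
    unfolding J_def by (intro integrable_integral integrable_continuous_interval continuous_on_subset[OF psiR_cont]) auto
  have J_nn: "J \<ge> 0" unfolding J_def by (intro integral_nonneg) (auto intro: psiR_nn integrable_continuous_interval continuous_on_subset[OF psiR_cont])
  have e1: "(\<integral>\<^sup>+s. ennreal (psiR R s) * indicator {x..t} s \<partial>lborel) = ennreal J"
    by (rule nn_integral_has_integral_lebesgue'[OF _ hasint]) (rule psiR_nn)
  have e2: "ennreal (psiR R s) = (\<integral>\<^sup>+y. ennreal (?g s y) \<partial>lborel)" for s
    unfolding psiR_def
    by (rule nn_integral_eq_integral[symmetric]) (auto intro!: psiR_int' AE_I2 simp: hnn phi_nn)
  have "ennreal J = (\<integral>\<^sup>+s. (\<integral>\<^sup>+y. ennreal (?g s y) \<partial>lborel) * indicator {x..t} s \<partial>lborel)"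
    unfolding e1[symmetric] e2 ..
  also have "\<dots> = (\<integral>\<^sup>+s. (\<integral>\<^sup>+y. ennreal (?g s y) * indicator {x..t} s \<partial>lborel) \<partial>lborel)"
    by (intro nn_integral_cong nn_integral_multc[symmetric]) measurable
  also have "\<dots> = (\<integral>\<^sup>+y. (\<integral>\<^sup>+s. ennreal (?g s y) * indicator {x..t} s \<partial>lborel) \<partial>lborel)"
    by (rule lborel_pair.Fubini'[symmetric]) measurable
  also have "\<dots> \<ge> (\<integral>\<^sup>+y. ennreal (indicator {-R..R} y * h y) * ennreal m0 \<partial>lborel)"
  proof (intro nn_integral_mono)
    fix y
    show "ennreal (indicator {-R..R} y * h y) * ennreal m0 \<le> (\<integral>\<^sup>+s. ennreal (?g s y) * indicator {x..t} s \<partial>lborel)"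
    proof (cases "y \<in> {-R..R}")
      case False then show ?thesis by simp
    next
      case True
      have inner: "ennreal m0 \<le> (\<integral>\<^sup>+s. ennreal (\<phi> (s - \<kappa> - y)) * indicator {x..t} s \<partial>lborel)"
      proof (cases "x - \<kappa> + R \<le> t - \<kappa> - R")
        case False
        then have "m0 = 0" unfolding m0_def using G_mono[of "t - \<kappa> - R" "x - \<kappa> + R"] by simp
        then show ?thesis by simp
      next
        case AB: True
        have m0e: "m0 = G (t - \<kappa> - R) - G (x - \<kappa> + R)" unfolding m0_def using G_mono[OF AB] by simp
        have "ennreal m0 = (\<integral>\<^sup>+u. ennreal (\<phi> u) * indicator {x - \<kappa> + R..t - \<kappa> - R} u \<partial>lborel)"
          unfolding m0e by (rule nn_integral_has_integral_lebesgue'[symmetric, OF _ G_int[OF AB]]) (rule phi_nn)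
        also have "\<dots> \<le> (\<integral>\<^sup>+u. ennreal (\<phi> u) * indicator {x - \<kappa> - y..t - \<kappa> - y} u \<partial>lborel)"
          using True by (intro nn_integral_mono) (auto simp: indicator_def)
        also have "\<dots> = (\<integral>\<^sup>+s. ennreal (\<phi> (s - \<kappa> - y)) * indicator {x..t} s \<partial>lborel)"
        proof -
          have "(\<integral>\<^sup>+u. ennreal (\<phi> u) * indicator {x - \<kappa> - y..t - \<kappa> - y} u \<partial>lborel) = (\<integral>\<^sup>+s. ennreal (\<phi> (-(\<kappa> + y) + 1 * s)) * indicator {x - \<kappa> - y..t - \<kappa> - y} (-(\<kappa> + y) + 1 * s) \<partial>lborel)"
            using nn_integral_real_affine[where c=1 and t="-(\<kappa>+y)" and f="\<lambda>u. ennreal (\<phi> u) * indicator {x - \<kappa> - y..t - \<kappa> - y} u"] by simp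
          moreover have "(\<integral>\<^sup>+s. ennreal (\<phi> (-(\<kappa> + y) + 1 * s)) * indicator {x - \<kappa> - y..t - \<kappa> - y} (-(\<kappa> + y) + 1 * s) \<partial>lborel) = (\<integral>\<^sup>+s. ennreal (\<phi> (s - \<kappa> - y)) * indicator {x..t} s \<partial>lborel)"
            by (intro nn_integral_cong) (auto simp: indicator_def algebra_simps)
          ultimately show ?thesis by simp
        qed
        finally show ?thesis .
      qed
      have "(\<integral>\<^sup>+s. ennreal (?g s y) * indicator {x..t} s \<partial>lborel) =
            (\<integral>\<^sup>+s. ennreal (h y) * (ennreal (\<phi> (s - \<kappa> - y)) * indicator {x..t} s) \<partial>lborel)"
        using True by (intro nn_integral_cong) (simp add: ennreal_mult hnn phi_nn mult.assoc)
      also have "\<dots> = ennreal (h y) * (\<integral>\<^sup>+s. ennreal (\<phi> (s - \<kappa> - y)) * indicator {x..t} s \<partial>lborel)"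
        by (rule nn_integral_cmult) measurable
      finally show ?thesis using True inner by (simp add: mult_left_mono)
    qed
  qed
  also have "(\<integral>\<^sup>+y. ennreal (indicator {-R..R} y * h y) * ennreal m0 \<partial>lborel) =
       (\<integral>\<^sup>+y. ennreal (indicator {-R..R} y * h y) \<partial>lborel) * ennreal m0"
    by (rule nn_integral_multc) measurable
  also have "(\<integral>\<^sup>+y. ennreal (indicator {-R..R} y * h y) \<partial>lborel) = ennreal (HR R)"
    unfolding HR_def by (rule nn_integral_eq_integral) (auto intro!: HR_int AE_I2 simp: hnn)
  finally have "ennreal (HR R * m0) \<le> ennreal J"
    by (simp add: ennreal_mult HR_nn m0_def)
  then show ?thesis using J_nn unfolding J_def m0_def by (simp add: ennreal_le_iff)
qed


lemma small_powr:
  assumes dl: "\<delta> > 0" and u: "0 \<le> u" "u \<le> (\<delta>/M) powr (1/\<sigma>) / 2" and v: "0 \<le> v" "v \<le> (\<delta>/M) powr (1/\<sigma>) / 2"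
  shows "M * (u + v) powr (1 + \<sigma>) \<le> \<delta> * (u + v)"
proof (cases "u + v = 0")
  case True then show ?thesis by simp
next
  case False
  define w where "w = u + v"
  have w: "w > 0" using False u v by (simp add: w_def)
  have wle: "w \<le> (\<delta>/M) powr (1/\<sigma>)" using u v by (simp add: w_def)
  have "w powr \<sigma> \<le> ((\<delta>/M) powr (1/\<sigma>)) powr \<sigma>"
    by (rule powr_mono2) (use sig w wle in auto)
  also have "\<dots> = \<delta>/M" using sig dl M by (simp add: powr_powr)
  finally have ws: "w powr \<sigma> \<le> \<delta>/M" .
  have "w powr (1 + \<sigma>) = w * w powr \<sigma>" using w by (simp add: powr_add)
  then have "M * w powr (1 + \<sigma>) = w * (M * w powr \<sigma>)" by simp
  also have "\<dots> \<le> w * \<delta>" using ws M w by (intro mult_left_mono) (auto simp: field_simps)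
  finally show ?thesis by (simp add: w_def mult.commute)
qed

lemma lower_exists:
  obtains \<alpha> \<beta> R \<xi>0 where "\<beta> \<ge> 0" "R \<ge> 0" "\<alpha> + \<beta> * HR R > 0"
    "\<And>s. s \<le> \<xi>0 \<Longrightarrow> f (\<phi> s) (\<psi> s) \<ge> \<alpha> * \<phi> s + \<beta> * psiR R s"
proof -
  define p where "p = (a + b) / 2"
  have p: "p > 0" using ab_pos by (simp add: p_def)
  obtain R \<delta> \<alpha> \<beta> where R: "R \<ge> 0" and dl: "\<delta> > 0" and be: "\<beta> \<ge> 0" and eta: "\<alpha> + \<beta> * HR R > 0"
    and ab: "(b > 0 \<and> \<alpha> = a - \<delta> \<and> \<beta> = b - \<delta>) \<or> (b = 0 \<and> \<alpha> = a - \<delta> \<and> \<beta> = 0)"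
  proof (cases "b > 0")
    case True
    have "\<forall>\<^sub>F n in sequentially. dist (HR (real n)) 1 < p / b"
      using HR_lim p True by (intro tendstoD) auto
    then obtain n where n: "dist (HR (real n)) 1 < p / b" by (meson eventually_sequentially order_refl)
    then have "b * (1 - HR n) < p" using True HR_le1[of n] by (simp add: dist_real_def field_simps)
    define \<delta> where "\<delta> = min (b/2) (p/4)"
    have dl: "\<delta> > 0" using True p by (simp add: \<delta>_def)
    have "a - \<delta> + (b - \<delta>) * HR n > 0"
    proof -
      have "a - \<delta> + (b - \<delta>) * HR n = (a + b) - b * (1 - HR n) - \<delta> * (1 + HR n)" by (simp add: algebra_simps)
      moreover have "\<delta> * (1 + HR n) \<le> (p/4) * 2"
        using HR_le1[of n] HR_nn[of n] dl by (intro mult_mono) (auto simp: \<delta>_def)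
      ultimately show ?thesis using \<open>b * (1 - HR n) < p\<close> p by (simp add: p_def)
    qed
    moreover have "b - \<delta> \<ge> 0" using True by (simp add: \<delta>_def)
    ultimately show ?thesis using that[of "real n" \<delta> "b - \<delta>" "a - \<delta>"] dl True by auto
  next
    case False
    then have b0: "b = 0" using b_nn by simp
    then have a: "a > 0" using ab_pos by simp
    show ?thesis using that[of 0 "a/2" 0 "a - a/2"] a b0 by auto
  qed
  define \<epsilon> where "\<epsilon> = min K ((\<delta>/M) powr (1/\<sigma>) / 2)"
  have eps: "\<epsilon> > 0" using K dl M by (simp add: \<epsilon>_def)
  have "\<forall>\<^sub>F s in at_bot. \<phi> s < \<epsilon>"
    using lim0 eps by (rule order_tendstoD)
  then obtain X where X: "\<And>s. s \<le> X \<Longrightarrow> \<phi> s < \<epsilon>" by (auto simp: eventually_at_bot_linorder)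
  show ?thesis
  proof (rule that[OF be R eta])
    fix s assume s: "s \<le> X - R"
    have ps: "\<phi> s \<le> \<epsilon>" using X[of s] s R by simp
    have pR: "psiR R s \<le> \<epsilon>"
      by (rule psiR_small) (use eps X s kappa_nn in \<open>auto intro: less_imp_le\<close>)
    have u: "\<phi> s \<in> {0..K}" using bnd by auto
    have small: "M * (u + v) powr (1 + \<sigma>) \<le> \<delta> * (u + v)" if "0 \<le> u" "u \<le> \<epsilon>" "0 \<le> v" "v \<le> \<epsilon>" for u v
      using small_powr[OF dl] that by (simp add: \<epsilon>_def)
    show "\<alpha> * \<phi> s + \<beta> * psiR R s \<le> f (\<phi> s) (\<psi> s)"
      using ab
    proof
      assume ab1: "0 < b \<and> \<alpha> = a - \<delta> \<and> \<beta> = b - \<delta>"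
      have "f (\<phi> s) (psiR R s) \<le> f (\<phi> s) (\<psi> s)"
        using f_mono[OF u psiR_nn psiR_le_psi psi_le] .
      moreover have "f (\<phi> s) (psiR R s) \<ge> a * \<phi> s + b * psiR R s - M * (\<phi> s + psiR R s) powr (1 + \<sigma>)"
        using f_lower[OF u] psiR_nn[of R s] psiR_le_psi[of R s] psi_le[of s] by auto
      moreover have "M * (\<phi> s + psiR R s) powr (1 + \<sigma>) \<le> \<delta> * (\<phi> s + psiR R s)"
        using small[OF phi_nn ps psiR_nn pR] .
      moreover have "\<alpha> * \<phi> s + \<beta> * psiR R s = a * \<phi> s + b * psiR R s - \<delta> * (\<phi> s + psiR R s)"
      proof -
        have "a = \<alpha> + \<delta>" "b = \<beta> + \<delta>" using ab1 by auto
        then show ?thesis by (simp add: algebra_simps)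
      qed
      ultimately show ?thesis by linarith
    next
      assume ab2: "b = 0 \<and> \<alpha> = a - \<delta> \<and> \<beta> = 0"
      have "f (\<phi> s) 0 \<le> f (\<phi> s) (\<psi> s)"
        using f_mono[OF u _ psi_nn psi_le] by simp
      moreover have "f (\<phi> s) 0 \<ge> a * \<phi> s - M * (\<phi> s) powr (1 + \<sigma>)"
        using f_lower[OF u, of 0] K ab2 by simp
      moreover have "M * (\<phi> s + 0) powr (1 + \<sigma>) \<le> \<delta> * (\<phi> s + 0)"
        using small[OF phi_nn ps, of 0] eps by simp
      moreover have "\<alpha> * \<phi> s + \<beta> * psiR R s = a * \<phi> s - \<delta> * (\<phi> s + 0)"
      proof -
        have "a = \<alpha> + \<delta>" "\<beta> = 0" using ab2 by auto
        then show ?thesis by (simp add: algebra_simps)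
      qed
      ultimately show ?thesis by simp
    qed
  qed
qed

definition "V s = c * \<phi> s - d * (G (s + 1) - 2 * G s + G (s - 1))"

lemma V_deriv: "(V has_real_derivative f (\<phi> s) (\<psi> s)) (at s)"
proof -
  have g1: "((\<lambda>s. G (s + 1)) has_real_derivative \<phi> (s + 1)) (at s)"
    using G_deriv[of "s + 1"] by (simp add: DERIV_shift)
  have g2: "((\<lambda>s. G (s - 1)) has_real_derivative \<phi> (s - 1)) (at s)"
    using G_deriv[of "s + -1"] DERIV_shift[of G "\<phi> (s + -1)" s "-1"] by simp
  have "(V has_real_derivative c * deriv \<phi> s - d * (\<phi> (s + 1) - 2 * \<phi> s + \<phi> (s - 1))) (at s)"
    unfolding V_def[abs_def]
    by (intro DERIV_diff DERIV_cmult DERIV_add phi_deriv g1 g2 G_deriv)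
  moreover have "c * deriv \<phi> s - d * (\<phi> (s + 1) - 2 * \<phi> s + \<phi> (s - 1)) = f (\<phi> s) (\<psi> s)"
    using eq[of s] by (simp add: \<psi>_def \<kappa>_def discr_lap_def)
  ultimately show ?thesis by simp
qed

lemma key:
  assumes be: "\<beta> \<ge> 0" and low: "\<And>s. s \<le> \<xi>0 \<Longrightarrow> f (\<phi> s) (\<psi> s) \<ge> \<alpha> * \<phi> s + \<beta> * psiR R s"
    and xt: "x \<le> t" "t \<le> \<xi>0"
  shows "V t - V x \<ge> \<alpha> * (G t - G x) + \<beta> * (HR R * max 0 (G (t - \<kappa> - R) - G (x - \<kappa> + R)))"
proof -
  define J where "J = integral {x..t} (psiR R)"
  have vd: "(V has_vector_derivative f (\<phi> s) (\<psi> s)) (at s within {x..t})" for s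
    using V_deriv[of s] unfolding has_real_derivative_iff_has_vector_derivative
    by (rule has_vector_derivative_at_within)
  have F: "((\<lambda>s. f (\<phi> s) (\<psi> s)) has_integral (V t - V x)) {x..t}"
    using fundamental_theorem_of_calculus[OF xt(1) vd] .
  have pJ: "(psiR R has_integral J) {x..t}"
    unfolding J_def
    by (rule integrable_integral, rule integrable_continuous_interval, rule continuous_on_subset[OF psiR_cont]) simp
  have L1: "((\<lambda>s. \<alpha> * \<phi> s) has_integral (\<alpha> * (G t - G x))) {x..t}"
    using has_integral_mult_right[OF G_int[OF xt(1)]] .
  have L2: "((\<lambda>s. \<beta> * psiR R s) has_integral (\<beta> * J)) {x..t}"
    using has_integral_mult_right[OF pJ] .
  have Lw: "((\<lambda>s. \<alpha> * \<phi> s + \<beta> * psiR R s) has_integral (\<alpha> * (G t - G x) + \<beta> * J)) {x..t}"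
    using has_integral_add[OF L1 L2] .
  have le: "\<alpha> * \<phi> s + \<beta> * psiR R s \<le> f (\<phi> s) (\<psi> s)" if "s \<in> {x..t}" for s
    using low[of s] that xt by simp
  have "\<alpha> * (G t - G x) + \<beta> * J \<le> V t - V x"
    using has_integral_le[OF Lw F le] .
  moreover have "HR R * max 0 (G (t - \<kappa> - R) - G (x - \<kappa> + R)) \<le> J"
    unfolding J_def by (rule psiR_integral_lower[OF xt(1)])
  then have "\<beta> * (HR R * max 0 (G (t - \<kappa> - R) - G (x - \<kappa> + R))) \<le> \<beta> * J"
    using be by (rule mult_left_mono)
  ultimately show ?thesis by simp
qed

end



context tw begin

lemma shift_at_bot: "filterlim (\<lambda>x::real. x + c0) at_bot at_bot"
  unfolding filterlim_at_bot
proof (intro allI)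
  fix Z :: real
  show "eventually (\<lambda>x. x + c0 \<le> Z) at_bot"
    unfolding eventually_at_bot_linorder by (rule exI[of _ "Z - c0"]) auto
qed

lemma main_bound:
  obtains C \<gamma> where "C \<ge> 0" "\<gamma> > 0" "\<And>t. \<phi> t \<le> C * exp (\<gamma> * t)"
proof -
  obtain \<beta> R \<alpha> \<xi>0 where be: "\<beta> \<ge> 0" and R: "R \<ge> 0" and eta0: "\<alpha> + \<beta> * HR R > 0"
    and low: "\<And>s. s \<le> \<xi>0 \<Longrightarrow> f (\<phi> s) (\<psi> s) \<ge> \<alpha> * \<phi> s + \<beta> * psiR R s"
    by (rule lower_exists) blast
  define \<gamma>0 where "\<gamma>0 = \<beta> * HR R"
  define L where "L = \<kappa> + R"
  define A where "A = R - \<kappa>"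
  define \<eta> where "\<eta> = \<alpha> + \<gamma>0"
  define am where "am = max 0 (-\<alpha>)"
  have g0: "\<gamma>0 \<ge> 0" using be HR_nn by (simp add: \<gamma>0_def)
  have eta: "\<eta> > 0" using eta0 by (simp add: \<eta>_def \<gamma>0_def)
  have am0: "am \<ge> 0" "\<alpha> + am \<ge> 0" by (auto simp: am_def)
  have L0: "L \<ge> 0" "A \<le> L" "-A \<le> L" "0 \<le> L + A" using R kappa_nn by (auto simp: L_def A_def)
  have KEY: "V t - V x \<ge> \<alpha> * (G t - G x) + \<gamma>0 * max 0 (G (t - L) - G (x + A))"
    if "x \<le> t" "t \<le> \<xi>0" for x t
  proof -
    have e: "t - L = t - \<kappa> - R" "x + A = x - \<kappa> + R" by (simp_all add: L_def A_def)
    show ?thesis unfolding e \<gamma>0_def using key[OF be low that] by (simp add: mult.assoc)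
  qed
  have GD: "0 \<le> G v - G u" "G v - G u \<le> K * (v - u)" if "u \<le> v" for u v
    using G_mono_lip[OF that] by auto
  have Vb: "\<bar>V s\<bar> \<le> (c + d) * K" for s
  proof -
    have "0 \<le> G (s+1) - G s" "G (s+1) - G s \<le> K" using GD[of s "s+1"] by auto
    moreover have "0 \<le> G s - G (s-1)" "G s - G (s-1) \<le> K" using GD[of "s-1" s] by auto
    ultimately have "\<bar>G (s + 1) - 2 * G s + G (s - 1)\<bar> \<le> K" by (simp add: abs_le_iff)
    then have 1: "\<bar>d * (G (s + 1) - 2 * G s + G (s - 1))\<bar> \<le> d * K"
      using d by (simp add: abs_mult mult_left_mono)
    have 2: "\<bar>c * \<phi> s\<bar> \<le> c * K" using c bnd[of s] by (simp add: abs_mult mult_left_mono)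
    have "\<bar>V s\<bar> \<le> \<bar>c * \<phi> s\<bar> + \<bar>d * (G (s + 1) - 2 * G s + G (s - 1))\<bar>"
      unfolding V_def by (rule abs_triangle_ineq4)
    also have "\<dots> \<le> c * K + d * K" using 1 2 by linarith
    finally show ?thesis by (simp add: algebra_simps)
  qed
  define Db where "Db = (2 * ((c + d) * K) + \<bar>\<alpha>\<bar> * (2 * K * L)) / \<eta>"
  have Dbound: "G (\<xi>0 - L) - G z \<le> Db" if z: "z \<le> \<xi>0 - L" for z
  proof -
    define x where "x = z - A"
    have xt: "x \<le> \<xi>0" using z L0 by (simp add: x_def)
    have k: "V \<xi>0 - V x \<ge> \<alpha> * (G \<xi>0 - G x) + \<gamma>0 * max 0 (G (\<xi>0 - L) - G (x + A))"
      by (rule KEY[OF xt order_refl])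
    define D where "D = G (\<xi>0 - L) - G z"
    have D0: "D \<ge> 0" using GD[OF z] by (simp add: D_def)
    have xa: "x + A = z" by (simp add: x_def)
    define E1 where "E1 = G \<xi>0 - G (\<xi>0 - L)"
    define E2 where "E2 = G z - G x"
    have E1: "0 \<le> E1" "E1 \<le> K * L" using GD[of "\<xi>0 - L" \<xi>0] L0 by (auto simp: E1_def)
    have E2: "\<bar>E2\<bar> \<le> K * L"
    proof (cases "A \<ge> 0")
      case True
      then have xz: "x \<le> z" by (simp add: x_def)
      have "K * (z - x) \<le> K * L" using L0 K by (intro mult_left_mono) (auto simp: x_def)
      then show ?thesis using GD[OF xz] by (auto simp: E2_def abs_le_iff)
    next
      case False
      then have xz: "z \<le> x" by (simp add: x_def)
      have "K * (x - z) \<le> K * L" using L0 K by (intro mult_left_mono) (auto simp: x_def)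
      then show ?thesis using GD[OF xz] by (auto simp: E2_def abs_le_iff)
    qed
    have sum: "G \<xi>0 - G x = E1 + D + E2" by (simp add: E1_def D_def E2_def)
    have "\<bar>E1 + E2\<bar> \<le> 2 * K * L" using E1 E2 by (simp add: abs_le_iff)
    then have "\<bar>\<alpha>\<bar> * \<bar>E1 + E2\<bar> \<le> \<bar>\<alpha>\<bar> * (2 * K * L)" by (rule mult_left_mono) simp
    then have "\<bar>\<alpha> * (E1 + E2)\<bar> \<le> \<bar>\<alpha>\<bar> * (2 * K * L)" by (simp add: abs_mult)
    then have 1: "\<alpha> * (E1 + E2) \<ge> - (\<bar>\<alpha>\<bar> * (2 * K * L))" by linarith
    have 2: "V \<xi>0 - V x \<le> 2 * ((c + d) * K)" using Vb[of \<xi>0] Vb[of x] by (simp only: abs_le_iff) linarith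
    have 3: "V \<xi>0 - V x \<ge> \<alpha> * (E1 + D + E2) + \<gamma>0 * D"
      using k sum D0 xa by (simp add: D_def)
    have 4: "\<alpha> * (E1 + D + E2) + \<gamma>0 * D = \<eta> * D + \<alpha> * (E1 + E2)"
      by (simp add: \<eta>_def algebra_simps)
    have "\<eta> * D \<le> 2 * ((c + d) * K) + \<bar>\<alpha>\<bar> * (2 * K * L)" using 1 2 3 4 by linarith
    then have "D \<le> Db" unfolding Db_def using eta by (simp add: pos_le_divide_eq mult.commute)
    then show ?thesis by (simp add: D_def)
  qed
  have Dbnn: "Db \<ge> 0" unfolding Db_def using eta c d K L0 by (intro divide_nonneg_pos) auto
  have Glow: "G z \<ge> G (\<xi>0 - L) - Db" for z
  proof (cases "z \<le> \<xi>0 - L")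
    case True then show ?thesis using Dbound[OF True] by simp
  next
    case False then show ?thesis using G_mono[of "\<xi>0 - L" z] Dbnn by simp
  qed
  have bdd: "bdd_below (range G)"
    by (rule bdd_belowI2[where m = "G (\<xi>0 - L) - Db"]) (rule Glow)
  define Ginf where "Ginf = Inf (range G)"
  have Ginf_le: "Ginf \<le> G z" for z unfolding Ginf_def by (rule cInf_lower) (use bdd in auto)
  have Glim: "(G \<longlongrightarrow> Ginf) at_bot"
  proof (rule order_tendstoI)
    fix y assume "y < Ginf"
    then show "eventually (\<lambda>x. y < G x) at_bot"
      using Ginf_le by (intro always_eventually) (auto intro: less_le_trans)
  next
    fix y assume y: "Ginf < y"
    then obtain z where z: "G z < y" unfolding Ginf_def using cInf_less_iff[of "range G" y] bdd by auto
    show "eventually (\<lambda>x. G x < y) at_bot"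
      unfolding eventually_at_bot_linorder
      by (rule exI[of _ z]) (use z G_mono in \<open>auto intro: le_less_trans\<close>)
  qed
  define \<Phi> where "\<Phi> s = G s - Ginf" for s
  have \<Phi>_nn: "\<Phi> s \<ge> 0" for s using Ginf_le by (simp add: \<Phi>_def)
  have \<Phi>_mono: "\<Phi> u \<le> \<Phi> v" if "u \<le> v" for u v using G_mono[OF that] by (simp add: \<Phi>_def)
  have \<Phi>_lim: "(\<Phi> \<longlongrightarrow> 0) at_bot"
    using tendsto_diff[OF Glim tendsto_const[of Ginf]] by (simp add: \<Phi>_def[abs_def])
  have \<Phi>_shift: "((\<lambda>x. \<Phi> (x + c0)) \<longlongrightarrow> 0) at_bot" for c0
    using filterlim_compose[OF \<Phi>_lim shift_at_bot[of c0]] .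
  have \<Phi>_deriv: "(\<Phi> has_real_derivative \<phi> x) (at x)" for x
    unfolding \<Phi>_def[abs_def] using DERIV_diff[OF G_deriv[of x] DERIV_const[of Ginf]] by simp
  have Vs_eq: "V s = c * \<phi> s - d * (\<Phi> (s + 1) - 2 * \<Phi> s + \<Phi> (s + -1))" for s
    by (simp add: V_def \<Phi>_def algebra_simps)
  have Vlim: "(V \<longlongrightarrow> 0) at_bot"
  proof -
    have "((\<lambda>s. c * \<phi> s - d * (\<Phi> (s + 1) - 2 * \<Phi> s + \<Phi> (s + -1))) \<longlongrightarrow> c * 0 - d * (0 - 2 * 0 + 0)) at_bot"
      by (intro tendsto_intros lim0 \<Phi>_lim \<Phi>_shift)
    then show ?thesis by (simp add: Vs_eq[abs_def])
  qed
  have Star: "V t \<ge> \<alpha> * \<Phi> t + \<gamma>0 * \<Phi> (t - L)" if t: "t \<le> \<xi>0" for t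
  proof -
    have lim1: "((\<lambda>x. V t - V x) \<longlongrightarrow> V t - 0) at_bot"
      by (intro tendsto_intros Vlim)
    have lim2: "((\<lambda>x. \<alpha> * (\<Phi> t - \<Phi> x) + \<gamma>0 * max 0 (\<Phi> (t - L) - \<Phi> (x + A))) \<longlongrightarrow>
                 \<alpha> * (\<Phi> t - 0) + \<gamma>0 * max 0 (\<Phi> (t - L) - 0)) at_bot"
      by (intro tendsto_intros \<Phi>_lim \<Phi>_shift)
    have ev: "eventually (\<lambda>x. \<alpha> * (\<Phi> t - \<Phi> x) + \<gamma>0 * max 0 (\<Phi> (t - L) - \<Phi> (x + A)) \<le> V t - V x) at_bot"
      unfolding eventually_at_bot_linorder
    proof (rule exI[of _ t], intro allI impI)
      fix x assume "x \<le> t"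
      then show "\<alpha> * (\<Phi> t - \<Phi> x) + \<gamma>0 * max 0 (\<Phi> (t - L) - \<Phi> (x + A)) \<le> V t - V x"
        using KEY[of x t] t by (simp add: \<Phi>_def)
    qed
    have "\<alpha> * (\<Phi> t - 0) + \<gamma>0 * max 0 (\<Phi> (t - L) - 0) \<le> V t - 0"
      by (rule tendsto_le[OF trivial_limit_at_bot_linorder lim1 lim2 ev])
    then show ?thesis using \<Phi>_nn[of "t - L"] by simp
  qed
  have \<Phi>cont: "isCont \<Phi> x" for x using \<Phi>_deriv DERIV_isCont by blast
  obtain P where P: "\<And>x. (P has_real_derivative \<Phi> x) (at x)"
  proof -
    have "\<exists>P. \<forall>x::real. -\<infinity> < ereal x \<longrightarrow> ereal x < \<infinity> \<longrightarrow> (P has_vector_derivative \<Phi> x) (at x)"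
      by (rule einterval_antiderivative) (auto intro: \<Phi>cont)
    then obtain P where "\<forall>x. (P has_vector_derivative \<Phi> x) (at x)" by auto
    then show ?thesis using that unfolding has_real_derivative_iff_has_vector_derivative by blast
  qed
  have Pb: "(b - a) * \<Phi> a \<le> P b - P a \<and> P b - P a \<le> (b - a) * \<Phi> b" if ab: "a \<le> b" for a b
  proof (cases "a = b")
    case True then show ?thesis by simp
  next
    case False
    then have "a < b" using ab by simp
    then obtain z where z: "a < z" "z < b" "P b - P a = (b - a) * \<Phi> z"
      using MVT2[of a b P \<Phi>] P by blast
    have "(b - a) * \<Phi> a \<le> (b - a) * \<Phi> z" using z ab by (intro mult_left_mono \<Phi>_mono) auto
    moreover have "(b - a) * \<Phi> z \<le> (b - a) * \<Phi> b" using z ab by (intro mult_left_mono \<Phi>_mono) auto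
    ultimately show ?thesis using z by simp
  qed
  define W where "W t = c * \<Phi> t - d * (P (t + 1) - P t) + d * (P t - P (t - 1)) + am * (P t - P (t - L)) - \<eta> * P (t - L)" for t
  have W_deriv: "(W has_real_derivative
      (c * \<phi> t - d * (\<Phi> (t + 1) - \<Phi> t) + d * (\<Phi> t - \<Phi> (t - 1)) + am * (\<Phi> t - \<Phi> (t - L)) - \<eta> * \<Phi> (t - L))) (at t)" for t
  proof -
    have p1: "((\<lambda>t. P (t + 1)) has_real_derivative \<Phi> (t + 1)) (at t)"
      using P[of "t + 1"] by (simp add: DERIV_shift)
    have pm1: "((\<lambda>t. P (t - 1)) has_real_derivative \<Phi> (t - 1)) (at t)"
      using P[of "t + -1"] DERIV_shift[of P "\<Phi> (t + -1)" t "-1"] by simp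
    have pL: "((\<lambda>t. P (t - L)) has_real_derivative \<Phi> (t - L)) (at t)"
      using P[of "t + -L"] DERIV_shift[of P "\<Phi> (t + -L)" t "-L"] by simp
    show ?thesis unfolding W_def[abs_def]
      by (intro DERIV_diff DERIV_add DERIV_cmult \<Phi>_deriv P p1 pm1 pL)
  qed
  have Wd_nn: "0 \<le> c * \<phi> t - d * (\<Phi> (t + 1) - \<Phi> t) + d * (\<Phi> t - \<Phi> (t - 1)) + am * (\<Phi> t - \<Phi> (t - L)) - \<eta> * \<Phi> (t - L)"
    if t: "t \<le> \<xi>0" for t
  proof -
    have e: "c * \<phi> t - d * (\<Phi> (t + 1) - \<Phi> t) + d * (\<Phi> t - \<Phi> (t - 1)) + am * (\<Phi> t - \<Phi> (t - L)) - \<eta> * \<Phi> (t - L)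
        = V t + am * (\<Phi> t - \<Phi> (t - L)) - \<eta> * \<Phi> (t - L)"
      by (simp add: Vs_eq algebra_simps)
    have "V t + am * (\<Phi> t - \<Phi> (t - L)) - \<eta> * \<Phi> (t - L) \<ge>
          \<alpha> * \<Phi> t + \<gamma>0 * \<Phi> (t - L) + am * (\<Phi> t - \<Phi> (t - L)) - \<eta> * \<Phi> (t - L)"
      using Star[OF t] by simp
    moreover have "\<alpha> * \<Phi> t + \<gamma>0 * \<Phi> (t - L) + am * (\<Phi> t - \<Phi> (t - L)) - \<eta> * \<Phi> (t - L)
        = (\<alpha> + am) * (\<Phi> t - \<Phi> (t - L))"
      by (simp add: \<eta>_def algebra_simps)
    moreover have "(\<alpha> + am) * (\<Phi> t - \<Phi> (t - L)) \<ge> 0"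
      using am0 \<Phi>_mono[of "t - L" t] L0 by (intro mult_nonneg_nonneg) auto
    ultimately show ?thesis unfolding e by linarith
  qed
  have W_mono: "W u \<le> W v" if uv: "u \<le> v" "v \<le> \<xi>0" for u v
  proof (rule DERIV_nonneg_imp_increasing_open[OF uv(1)])
    fix x assume x: "u < x" "x < v"
    show "\<exists>y. (W has_real_derivative y) (at x) \<and> 0 \<le> y"
      using W_deriv[of x] Wd_nn[of x] x uv by auto
  next
    show "continuous_on {u..v} W"
      using W_deriv by (meson DERIV_isCont continuous_at_imp_continuous_on)
  qed
  define Q where "Q = c + d + am * L"
  have Q: "Q > 0" using c d mult_nonneg_nonneg[OF am0(1) L0(1)] unfolding Q_def by linarith
  define N where "N = 2 * Q / \<eta> + 1"
  have N1: "N \<ge> 1" using Q eta by (simp add: N_def)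
  have etaN: "\<eta> * N = 2 * Q + \<eta>" using eta by (simp add: N_def field_simps)
  have half: "\<Phi> (\<xi> - N - L) \<le> \<Phi> \<xi> / 2" if xi: "\<xi> \<le> \<xi>0" for \<xi>
  proof -
    have Wle: "W (\<xi> - N) \<le> W \<xi>" using W_mono[of "\<xi> - N" \<xi>] N1 xi by simp
    have a1: "d * \<Phi> \<xi> \<le> d * (P (\<xi> + 1) - P \<xi>)"
      using Pb[of \<xi> "\<xi> + 1"] d by (intro mult_left_mono) auto
    have a2: "d * (P \<xi> - P (\<xi> - 1)) \<le> d * \<Phi> \<xi>"
      using Pb[of "\<xi> - 1" \<xi>] d by (intro mult_left_mono) auto
    have a3: "am * (P \<xi> - P (\<xi> - L)) \<le> am * (L * \<Phi> \<xi>)"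
      using Pb[of "\<xi> - L" \<xi>] am0 L0 by (intro mult_left_mono) auto
    have up: "W \<xi> \<le> c * \<Phi> \<xi> + am * (L * \<Phi> \<xi>) - \<eta> * P (\<xi> - L)"
      using a1 a2 a3 unfolding W_def by linarith
    have b1: "d * (P (\<xi> - N + 1) - P (\<xi> - N)) \<le> d * \<Phi> \<xi>"
    proof -
      have "P (\<xi> - N + 1) - P (\<xi> - N) \<le> \<Phi> (\<xi> - N + 1)" using Pb[of "\<xi> - N" "\<xi> - N + 1"] by simp
      also have "\<dots> \<le> \<Phi> \<xi>" using N1 by (intro \<Phi>_mono) simp
      finally show ?thesis using d by (intro mult_left_mono) auto
    qed
    have b2: "0 \<le> d * (P (\<xi> - N) - P (\<xi> - N - 1))"
      using Pb[of "\<xi> - N - 1" "\<xi> - N"] d \<Phi>_nn[of "\<xi> - N - 1"] by (intro mult_nonneg_nonneg) auto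
    have b3: "0 \<le> am * (P (\<xi> - N) - P (\<xi> - N - L))"
    proof -
      have "0 \<le> (\<xi> - N - (\<xi> - N - L)) * \<Phi> (\<xi> - N - L)"
        using L0 \<Phi>_nn[of "\<xi> - N - L"] by simp
      also have "\<dots> \<le> P (\<xi> - N) - P (\<xi> - N - L)" using Pb[of "\<xi> - N - L" "\<xi> - N"] L0 by simp
      finally show ?thesis using am0 by simp
    qed
    have b4: "0 \<le> c * \<Phi> (\<xi> - N)" using c \<Phi>_nn by simp
    have lo: "W (\<xi> - N) \<ge> - (d * \<Phi> \<xi>) - \<eta> * P (\<xi> - N - L)"
      using b1 b2 b3 b4 unfolding W_def by linarith
    have mid: "N * \<Phi> (\<xi> - N - L) \<le> P (\<xi> - L) - P (\<xi> - N - L)"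
      using Pb[of "\<xi> - N - L" "\<xi> - L"] N1 by simp
    have c1: "\<eta> * (P (\<xi> - L) - P (\<xi> - N - L)) \<le> c * \<Phi> \<xi> + d * \<Phi> \<xi> + am * (L * \<Phi> \<xi>)"
      using Wle up lo by (simp add: algebra_simps)
    have c2: "\<eta> * (N * \<Phi> (\<xi> - N - L)) \<le> \<eta> * (P (\<xi> - L) - P (\<xi> - N - L))"
      using mid eta by (intro mult_left_mono) auto
    have c3: "\<eta> * (N * \<Phi> (\<xi> - N - L)) = 2 * Q * \<Phi> (\<xi> - N - L) + \<eta> * \<Phi> (\<xi> - N - L)"
    proof -
      have "\<eta> * (N * \<Phi> (\<xi> - N - L)) = (\<eta> * N) * \<Phi> (\<xi> - N - L)" by (rule mult.assoc[symmetric])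
      also have "\<dots> = (2 * Q + \<eta>) * \<Phi> (\<xi> - N - L)" by (simp only: etaN)
      also have "\<dots> = 2 * Q * \<Phi> (\<xi> - N - L) + \<eta> * \<Phi> (\<xi> - N - L)" by (rule distrib_right)
      finally show ?thesis .
    qed
    have c4: "c * \<Phi> \<xi> + d * \<Phi> \<xi> + am * (L * \<Phi> \<xi>) = Q * \<Phi> \<xi>" by (simp add: Q_def algebra_simps)
    have c5: "0 \<le> \<eta> * \<Phi> (\<xi> - N - L)" using eta \<Phi>_nn by simp
    have "2 * Q * \<Phi> (\<xi> - N - L) \<le> Q * \<Phi> \<xi>" using c1 c2 c3 c4 c5 by linarith
    then have "Q * (2 * \<Phi> (\<xi> - N - L)) \<le> Q * \<Phi> \<xi>" by (simp add: algebra_simps)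
    then have "2 * \<Phi> (\<xi> - N - L) \<le> \<Phi> \<xi>" using Q by simp
    then show ?thesis by simp
  qed
  define T where "T = N + L"
  have T: "T > 0" using N1 L0 by (simp add: T_def)
  have half': "\<Phi> (\<xi> - T) \<le> \<Phi> \<xi> / 2" if "\<xi> \<le> \<xi>0" for \<xi>
    using half[OF that] by (simp add: T_def algebra_simps)
  have iter: "\<Phi> (\<xi>0 - real n * T) \<le> \<Phi> \<xi>0 / 2 ^ n" for n
  proof (induction n)
    case 0 then show ?case by simp
  next
    case (Suc n)
    have "\<Phi> (\<xi>0 - real (Suc n) * T) = \<Phi> ((\<xi>0 - real n * T) - T)" by (simp add: algebra_simps)
    also have "\<dots> \<le> \<Phi> (\<xi>0 - real n * T) / 2" using T by (intro half') simp
    also have "\<dots> \<le> \<Phi> \<xi>0 / 2 ^ n / 2" using Suc by simp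
    finally show ?case by simp
  qed
  define \<gamma>1 where "\<gamma>1 = ln 2 / T"
  have g1: "\<gamma>1 > 0" using T by (simp add: \<gamma>1_def)
  define C1 where "C1 = 2 * \<Phi> \<xi>0 * exp (- \<gamma>1 * \<xi>0)"
  have C1: "C1 \<ge> 0" using \<Phi>_nn by (simp add: C1_def)
  have expPhi: "\<Phi> t \<le> C1 * exp (\<gamma>1 * t)" if t: "t \<le> \<xi>0" for t
  proof -
    define q where "q = (\<xi>0 - t) / T"
    have q0: "q \<ge> 0" using t T by (simp add: q_def)
    define n where "n = nat \<lfloor>q\<rfloor>"
    have n1: "real n \<le> q" using q0 by (simp add: n_def)
    have n2: "q < real n + 1" using q0 by (simp add: n_def)
    have "real n * T \<le> \<xi>0 - t" using n1 T by (simp add: q_def pos_le_divide_eq)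
    then have "\<Phi> t \<le> \<Phi> (\<xi>0 - real n * T)" by (intro \<Phi>_mono) simp
    also have "\<dots> \<le> \<Phi> \<xi>0 / 2 ^ n" by (rule iter)
    also have "\<dots> \<le> C1 * exp (\<gamma>1 * t)"
    proof -
      have p2: "(2::real) ^ n = exp (real n * ln 2)"
        by (simp add: powr_realpow[symmetric] powr_def)
      have "\<gamma>1 * (t - \<xi>0) = - q * ln 2" using T by (simp add: \<gamma>1_def q_def field_simps)
      moreover have "real n * ln 2 \<ge> (q - 1) * ln 2" using n2 by (intro mult_right_mono) auto
      ultimately have ge: "\<gamma>1 * (t - \<xi>0) + real n * ln 2 \<ge> - ln 2" by (simp add: algebra_simps)
      have "C1 * exp (\<gamma>1 * t) * 2 ^ n = 2 * \<Phi> \<xi>0 * exp (\<gamma>1 * (t - \<xi>0) + real n * ln 2)"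
        unfolding C1_def p2 by (simp add: exp_add[symmetric] algebra_simps)
      also have "\<dots> \<ge> 2 * \<Phi> \<xi>0 * exp (- ln 2)"
        using ge \<Phi>_nn[of \<xi>0] by (intro mult_left_mono) auto
      also have "2 * \<Phi> \<xi>0 * exp (- ln 2) = \<Phi> \<xi>0" by (simp add: exp_minus)
      finally have "\<Phi> \<xi>0 \<le> C1 * exp (\<gamma>1 * t) * 2 ^ n" .
      then show ?thesis by (simp add: divide_le_eq)
    qed
    finally show ?thesis .
  qed
  obtain \<Lambda> where Lam: "\<Lambda> > 0" "\<And>x y. \<bar>\<phi> x - \<phi> y\<bar> \<le> \<Lambda> * \<bar>x - y\<bar>" using phi_lip by blast
  define \<Lambda>' where "\<Lambda>' = max \<Lambda> K"
  have Lam': "\<Lambda>' > 0" "\<Lambda> \<le> \<Lambda>'" "K \<le> \<Lambda>'" using Lam K by (auto simp: \<Lambda>'_def)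
  have sq: "(\<phi> t)^2 \<le> 4 * \<Lambda>' * \<Phi> (t + 1)" for t
  proof (cases "\<phi> t = 0")
    case True then show ?thesis using Lam' \<Phi>_nn by simp
  next
    case False
    define y where "y = \<phi> t"
    have y: "y > 0" "y \<le> K" using False bnd[of t] by (auto simp: y_def)
    define l where "l = y / (2 * \<Lambda>')"
    have l: "l > 0" "l \<le> 1" using y Lam' by (auto simp: l_def field_simps)
    obtain z where z: "t < z" "z < t + l" "G (t + l) - G t = (t + l - t) * \<phi> z"
      using MVT2[of t "t + l" G \<phi>, OF _ G_deriv] l by auto
    have "\<phi> z \<ge> y - \<Lambda> * \<bar>z - t\<bar>" using Lam(2)[of z t] by (simp add: y_def abs_le_iff)
    moreover have "\<Lambda> * \<bar>z - t\<bar> \<le> \<Lambda>' * l" using z Lam Lam' by (intro mult_mono) auto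
    moreover have "\<Lambda>' * l = y / 2" using Lam' by (simp add: l_def)
    ultimately have pz: "\<phi> z \<ge> y / 2" by linarith
    have "G (t + l) - G t \<ge> l * (y / 2)" using z pz l by (simp add: mult_left_mono)
    moreover have "l * (y / 2) = y^2 / (4 * \<Lambda>')" using Lam' by (simp add: l_def power2_eq_square field_simps)
    moreover have "G (t + 1) - G t \<ge> G (t + l) - G t" using G_mono[of "t + l" "t + 1"] l by simp
    moreover have "\<Phi> (t + 1) \<ge> G (t + 1) - G t" using \<Phi>_nn[of t] by (simp add: \<Phi>_def)
    ultimately have "y^2 / (4 * \<Lambda>') \<le> \<Phi> (t + 1)" by linarith
    then show ?thesis using Lam' by (simp add: y_def divide_le_eq mult.commute)
  qed
  define \<gamma>2 where "\<gamma>2 = \<gamma>1 / 2"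
  define C3 where "C3 = sqrt (4 * \<Lambda>' * C1 * exp \<gamma>1)"
  have C3: "C3 \<ge> 0" unfolding C3_def using C1 Lam' by (intro real_sqrt_ge_zero) simp
  have left: "\<phi> t \<le> C3 * exp (\<gamma>2 * t)" if t: "t \<le> \<xi>0 - 1" for t
  proof -
    have s1: "(\<phi> t)^2 \<le> 4 * \<Lambda>' * (C1 * exp (\<gamma>1 * (t + 1)))"
    proof -
      have "\<Phi> (t + 1) \<le> C1 * exp (\<gamma>1 * (t + 1))" using expPhi[of "t + 1"] t by simp
      then have "4 * \<Lambda>' * \<Phi> (t + 1) \<le> 4 * \<Lambda>' * (C1 * exp (\<gamma>1 * (t + 1)))"
        using Lam' by (intro mult_left_mono) auto
      then show ?thesis using sq[of t] by linarith
    qed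
    have e1: "C3^2 = 4 * \<Lambda>' * C1 * exp \<gamma>1"
      unfolding C3_def by (rule real_sqrt_pow2) (use Lam' C1 in simp)
    have e2: "(exp (\<gamma>2 * t))^2 = exp (\<gamma>1 * t)"
    proof -
      have h: "\<gamma>2 * t + \<gamma>2 * t = \<gamma>1 * t" by (simp add: \<gamma>2_def field_simps)
      have "(exp (\<gamma>2 * t))^2 = exp (\<gamma>2 * t) * exp (\<gamma>2 * t)" by (rule power2_eq_square)
      also have "\<dots> = exp (\<gamma>2 * t + \<gamma>2 * t)" by (rule exp_add[symmetric])
      also have "\<dots> = exp (\<gamma>1 * t)" by (simp only: h)
      finally show ?thesis .
    qed
    have e3: "exp (\<gamma>1 * (t + 1)) = exp \<gamma>1 * exp (\<gamma>1 * t)"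
    proof -
      have h: "\<gamma>1 * (t + 1) = \<gamma>1 + \<gamma>1 * t" by (simp add: algebra_simps)
      show ?thesis by (simp only: h exp_add)
    qed
    have "(C3 * exp (\<gamma>2 * t))^2 = C3^2 * (exp (\<gamma>2 * t))^2" by (rule power_mult_distrib)
    also have "\<dots> = 4 * \<Lambda>' * (C1 * exp (\<gamma>1 * (t + 1)))" by (simp only: e1 e2 e3 mult.assoc)
    finally have eq: "(C3 * exp (\<gamma>2 * t))^2 = 4 * \<Lambda>' * (C1 * exp (\<gamma>1 * (t + 1)))" .
    have "(\<phi> t)^2 \<le> (C3 * exp (\<gamma>2 * t))^2" using s1 eq by linarith
    moreover have "0 \<le> C3 * exp (\<gamma>2 * t)" using C3 by simp
    ultimately show ?thesis by (rule power2_le_imp_le)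
  qed
  define C where "C = max C3 (K * exp (- \<gamma>2 * (\<xi>0 - 1)))"
  have g2: "\<gamma>2 > 0" using g1 by (simp add: \<gamma>2_def)
  show ?thesis
  proof (rule that[of C \<gamma>2])
    show "C \<ge> 0" using C3 by (simp add: C_def)
    show "\<gamma>2 > 0" by fact
    fix t
    show "\<phi> t \<le> C * exp (\<gamma>2 * t)"
    proof (cases "t \<le> \<xi>0 - 1")
      case True
      then have "\<phi> t \<le> C3 * exp (\<gamma>2 * t)" by (rule left)
      also have "\<dots> \<le> C * exp (\<gamma>2 * t)" by (intro mult_right_mono) (auto simp: C_def)
      finally show ?thesis .
    next
      case False
      have "\<phi> t \<le> K" using bnd by auto
      also have "K \<le> K * exp (\<gamma>2 * (t - (\<xi>0 - 1)))" using False g2 K by simp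
      also have "\<dots> = K * exp (- \<gamma>2 * (\<xi>0 - 1)) * exp (\<gamma>2 * t)"
        by (simp add: exp_add[symmetric] algebra_simps)
      also have "\<dots> \<le> C * exp (\<gamma>2 * t)" by (intro mult_right_mono) (auto simp: C_def)
      finally show ?thesis .
    qed
  qed
qed

end



lemma exp_nn_integral:
  fixes \<gamma> \<xi> :: real assumes g: "\<gamma> > 0"
  shows "(\<integral>\<^sup>+x. ennreal (exp (\<gamma> * x)) * indicator {..\<xi>} x \<partial>lborel) = ennreal (exp (\<gamma> * \<xi>) / \<gamma>)"
proof -
  have "(\<integral>\<^sup>+x. ennreal (exp (\<gamma> * x)) * indicator {..\<xi>} x \<partial>lborel) =
        (\<integral>\<^sup>+x. ennreal (exp (\<gamma> * (0 + -1 * x))) * indicator {..\<xi>} (0 + -1 * x) \<partial>lborel)"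
    using nn_integral_real_affine[where c="-1" and t=0 and f="\<lambda>x. ennreal (exp (\<gamma> * x)) * indicator {..\<xi>} x"]
    by simp
  also have "\<dots> = (\<integral>\<^sup>+x. ennreal (exp (- \<gamma> * x)) * indicator {-\<xi>..} x \<partial>lborel)"
    by (intro nn_integral_cong) (auto simp: indicator_def)
  also have "\<dots> = ennreal (exp (- \<gamma> * (-\<xi>)) / \<gamma>)"
    by (rule nn_integral_has_integral_lebesgue'[OF _ has_integral_exp_minus_to_infinity[OF g]]) simp
  finally show ?thesis by simp
qed

lemma exp_bound_integral:
  fixes \<phi> :: "real \<Rightarrow> real" and C \<gamma> \<xi> :: real
  assumes meas: "\<phi> \<in> borel_measurable borel" and nn: "\<And>t. 0 \<le> \<phi> t"
    and bd: "\<And>t. \<phi> t \<le> C * exp (\<gamma> * t)" and g: "\<gamma> > 0" and C: "C \<ge> 0"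
  shows "set_integrable lborel {..\<xi>} \<phi>" "(LINT s:{..\<xi>}|lborel. \<phi> s) \<le> C * (exp (\<gamma> * \<xi>) / \<gamma>)"
proof -
  have NN: "(\<integral>\<^sup>+x. ennreal (indicator {..\<xi>} x * \<phi> x) \<partial>lborel) \<le> ennreal (C * (exp (\<gamma> * \<xi>) / \<gamma>))"
  proof -
    have "(\<integral>\<^sup>+x. ennreal (indicator {..\<xi>} x * \<phi> x) \<partial>lborel) \<le>
          (\<integral>\<^sup>+x. ennreal C * (ennreal (exp (\<gamma> * x)) * indicator {..\<xi>} x) \<partial>lborel)"
    proof (intro nn_integral_mono)
      fix x
      have "indicator {..\<xi>} x * \<phi> x \<le> C * exp (\<gamma> * x) * indicator {..\<xi>} x"
        using bd[of x] by (simp add: indicator_def)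
      then have "ennreal (indicator {..\<xi>} x * \<phi> x) \<le> ennreal (C * exp (\<gamma> * x) * indicator {..\<xi>} x)"
        by (rule ennreal_leI)
      also have "\<dots> = ennreal C * (ennreal (exp (\<gamma> * x)) * indicator {..\<xi>} x)"
        using C by (simp add: ennreal_mult indicator_def)
      finally show "ennreal (indicator {..\<xi>} x * \<phi> x) \<le> ennreal C * (ennreal (exp (\<gamma> * x)) * indicator {..\<xi>} x)" .
    qed
    also have "\<dots> = ennreal C * (\<integral>\<^sup>+x. ennreal (exp (\<gamma> * x)) * indicator {..\<xi>} x \<partial>lborel)"
      by (rule nn_integral_cmult) measurable
    also have "\<dots> = ennreal (C * (exp (\<gamma> * \<xi>) / \<gamma>))"
      unfolding exp_nn_integral[OF g] by (rule ennreal_mult[symmetric]) (use C g in auto)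
    finally show ?thesis .
  qed
  have int: "integrable lborel (\<lambda>x. indicator {..\<xi>} x * \<phi> x)"
  proof (rule integrableI_nonneg)
    show "(\<lambda>x. indicator {..\<xi>} x * \<phi> x) \<in> borel_measurable lborel" using meas by measurable
    show "AE x in lborel. 0 \<le> indicator {..\<xi>} x * \<phi> x" using nn by (simp add: indicator_def)
    show "(\<integral>\<^sup>+x. ennreal (indicator {..\<xi>} x * \<phi> x) \<partial>lborel) < \<infinity>"
      using NN by (simp add: le_less_trans)
  qed
  then show "set_integrable lborel {..\<xi>} \<phi>" by (simp add: set_integrable_def)
  have "ennreal (LINT s:{..\<xi>}|lborel. \<phi> s) = (\<integral>\<^sup>+x. ennreal (indicator {..\<xi>} x * \<phi> x) \<partial>lborel)"
    unfolding set_lebesgue_integral_def real_scaleR_def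
    by (rule nn_integral_eq_integral[symmetric]) (use int nn in \<open>auto simp: indicator_def\<close>)
  with NN have "ennreal (LINT s:{..\<xi>}|lborel. \<phi> s) \<le> ennreal (C * (exp (\<gamma> * \<xi>) / \<gamma>))" by simp
  then show "(LINT s:{..\<xi>}|lborel. \<phi> s) \<le> C * (exp (\<gamma> * \<xi>) / \<gamma>)"
    using C g by (simp add: ennreal_le_iff)
qed

theorem lemma4p1:
  fixes d \<tau> K c :: real and f f1 f2 :: "real \<Rightarrow> real \<Rightarrow> real" and h \<phi> :: "real \<Rightarrow> real"
  assumes "d > 0" and "\<tau> \<ge> 0" and "K > 0"
    and "partials_on_square K f f1 f2"
    and "cond_F1 K f f2" and "cond_F2 K f f1 f2"
    and "cond_H1 h" and "cond_H2 h"
    and "tw_solution d \<tau> K f h c \<phi>"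
  shows "\<exists>\<gamma>>0. (\<forall>\<xi>. set_integrable lborel {..\<xi>} \<phi>) \<and>
           bdd_above (range (\<lambda>\<xi>. \<phi> \<xi> * exp (- \<gamma> * \<xi>))) \<and>
           bdd_above (range (\<lambda>\<xi>. (LINT s:{..\<xi>}|lborel. \<phi> s) * exp (- \<gamma> * \<xi>)))"
proof -
  obtain M \<sigma> where M: "M > 0" and sig: "\<sigma> \<in> {0<..1}" and F2: "\<forall>u\<in>{0..K}. \<forall>v\<in>{0..K}.
        0 \<le> f1 0 0 * u + f2 0 0 * v - f u v \<and>
        f1 0 0 * u + f2 0 0 * v - f u v \<le> M * (u + v) powr (1 + \<sigma>)"
    using assms(6) unfolding cond_F2_def by blast
  interpret tw d \<tau> K c f f1 f2 h \<phi> M \<sigma>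
  proof (unfold_locales)
    show "0 < d" "0 \<le> \<tau>" "0 < K" by fact+
    show "0 < c" using assms(9) by (simp add: tw_solution_def)
    show "partials_on_square K f f1 f2" by fact
    show "continuous_on ({0..K} \<times> {0..K}) (\<lambda>(u, v). f u v)" using assms(5) by (simp add: cond_F1_def)
    show "\<And>u. u \<in> {0<..<K} \<Longrightarrow> 0 < f u u" using assms(5) by (simp add: cond_F1_def)
    show "\<And>u v. u \<in> {0..K} \<Longrightarrow> v \<in> {0..K} \<Longrightarrow> 0 \<le> f2 u v" using assms(5) by (simp add: cond_F1_def)
    show "0 < M" by fact
    show "0 < \<sigma>" "\<sigma> \<le> 1" using sig by auto
    show "\<And>u v. u \<in> {0..K} \<Longrightarrow> v \<in> {0..K} \<Longrightarrow>
        0 \<le> f1 0 0 * u + f2 0 0 * v - f u v \<and> f1 0 0 * u + f2 0 0 * v - f u v \<le> M * (u + v) powr (1 + \<sigma>)"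
      using F2 by blast
    show "\<And>x. 0 \<le> h x" "integrable lborel h" "(\<integral>x. h x \<partial>lborel) = 1"
      using assms(7) by (auto simp: cond_H1_def)
    show "\<And>\<xi>. \<phi> differentiable at \<xi>"
      "\<And>\<xi>. - c * deriv \<phi> \<xi> + d * discr_lap \<phi> \<xi> + f (\<phi> \<xi>) (conv h \<phi> (\<xi> - c * \<tau>)) = 0"
      "(\<phi> \<longlongrightarrow> 0) at_bot" "\<And>\<xi>. 0 \<le> \<phi> \<xi> \<and> \<phi> \<xi> \<le> K"
      using assms(9) by (auto simp: tw_solution_def)
  qed
  obtain C \<gamma> where C: "C \<ge> 0" and g: "\<gamma> > 0" and bd: "\<And>t. \<phi> t \<le> C * exp (\<gamma> * t)"
    using main_bound by blast
  have si: "set_integrable lborel {..\<xi>} \<phi>" for \<xi>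
    using exp_bound_integral(1)[OF phi_meas phi_nn bd g C] .
  have b1: "bdd_above (range (\<lambda>\<xi>. \<phi> \<xi> * exp (- \<gamma> * \<xi>)))"
  proof (rule bdd_aboveI2)
    fix \<xi>
    have "\<phi> \<xi> * exp (- \<gamma> * \<xi>) \<le> C * exp (\<gamma> * \<xi>) * exp (- \<gamma> * \<xi>)"
      using bd[of \<xi>] by (intro mult_right_mono) auto
    also have "\<dots> = C" by (simp add: mult.assoc exp_add[symmetric])
    finally show "\<phi> \<xi> * exp (- \<gamma> * \<xi>) \<le> C" .
  qed
  have b2: "bdd_above (range (\<lambda>\<xi>. (LINT s:{..\<xi>}|lborel. \<phi> s) * exp (- \<gamma> * \<xi>)))"
  proof (rule bdd_aboveI2)
    fix \<xi>
    have "(LINT s:{..\<xi>}|lborel. \<phi> s) * exp (- \<gamma> * \<xi>) \<le> C * (exp (\<gamma> * \<xi>) / \<gamma>) * exp (- \<gamma> * \<xi>)"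
      using exp_bound_integral(2)[OF phi_meas phi_nn bd g C] by (intro mult_right_mono) auto
    also have "\<dots> = C / \<gamma>" by (simp add: field_simps exp_add[symmetric])
    finally show "(LINT s:{..\<xi>}|lborel. \<phi> s) * exp (- \<gamma> * \<xi>) \<le> C / \<gamma>" .
  qed
  show ?thesis using g si b1 b2 by blast
qed


end
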